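(* For any valid scheme (satisfying (C1)–(C8)) with $N\ge1$, $K\ge2$, \[ \rho_S-\rho_U\ \ge\ \frac1N+\frac1{N^2}+\dots+\frac1{N^{K-1}}. \]
   Context: Model (SPIR with user-side common randomness). There are $N\ge1$ non-colluding databases, each storing the same $K\ge2$ messages $W_1,\dots,W_K$. Each message consists of $L$ i.i.d. symbols uniform over a sufficiently large finite field $\mathbb{F}_q$; entropies are in $q$-ary units, so $H(W_k)=L$ and $H(W_{1:K})=KL$. The databases share server-side common randomness $\mathcal{R}_S$, unknown to the user. The user holds user-side common randomness $\mathcal{R}_U$, a subset of the components of $\mathcal{R}_S$, unknown to the databases except for its size (uniform over subsets of given cardinality); in particular $H(\mathcal{R}_S\setminus\mathcal{R}_U)=H(\mathcal{R}_S)-H(\mathcal{R}_U)$. $\mathcal{F}$ is the user's retrieval-strategy randomness. To retrieve $W_k$ the user sends $Q_n^{[k,\mathcal{R}_U]}$ to database $n$, receiving $A_n^{[k,\mathcal{R}_U]}$; $W_{\bar k}=\{W_j:j\ne k\}$. A valid scheme satisfies for all $k,n,\mathcal{R}_U$: (C1) $I(W_{1:K};k,\mathcal{F},\mathcal{R}_S,\mathcal{R}_U)=0$; (C2) $I(Q_{1:N}^{[k,\mathcal{R}_U]};W_{1:K},\mathcal{R}_S\setminus\mathcal{R}_U)=0$; (C3) $H(Q_{1:N}^{[k,\mathcal{R}_U]}\mid\mathcal{F})=0$; (C4) $H(A_n^{[k,\mathcal{R}_U]}\mid Q_n^{[k,\mathcal{R}_U]},W_{1:K},\mathcal{R}_S)=0$;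 (C5) $H(W_k\mid\mathcal{F},A_{1:N}^{[k,\mathcal{R}_U]},\mathcal{R}_U)=0$; (C6) user privacy: for all $k,k',n,\mathcal{R}_U$ there is $\mathcal{R}_U'$ with $H(\mathcal{R}_U')=H(\mathcal{R}_U)$ and $(Q_n^{[k,\mathcal{R}_U]},A_n^{[k,\mathcal{R}_U]},W_{1:K},\mathcal{R}_S)\sim(Q_n^{[k',\mathcal{R}_U']},A_n^{[k',\mathcal{R}_U']},W_{1:K},\mathcal{R}_S)$; (C7) $I(W_{\bar k};\mathcal{F},A_{1:N}^{[k,\mathcal{R}_U]},\mathcal{R}_U)=0$; (C8) $I(\mathcal{R}_S\setminus\mathcal{R}_U;\mathcal{F},A_{1:N}^{[k,\mathcal{R}_U]},W_k,\mathcal{R}_U)=0$. $\rho_S=H(\mathcal{R}_S)/L$, $\rho_U=H(\mathcal{R}_U)/L$. *)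

theory Defs
  imports "HOL-Probability.Probability"
begin

text \<open>These are exactly the library abbreviations \<H>(X), \<H>(X|Y), \<I>(X;Y) of
  HOL-Probability.Information (discrete versions, counting measure on the range).\<close>

definition Ent :: "'a measure \<Rightarrow> real \<Rightarrow> ('a \<Rightarrow> 'b) \<Rightarrow> real" where
  "Ent M b X = prob_space.entropy M b (count_space (X ` space M)) X"

definition CEnt :: "'a measure \<Rightarrow> real \<Rightarrow> ('a \<Rightarrow> 'b) \<Rightarrow> ('a \<Rightarrow> 'c) \<Rightarrow> real" where
  "CEnt M b X Y = prob_space.conditional_entropy M b
      (count_space (X ` space M)) (count_space (Y ` space M)) X Y"

definition MI :: "'a measure \<Rightarrow> real \<Rightarrow> ('a \<Rightarrow> 'b) \<Rightarrow> ('a \<Rightarrow> 'c) \<Rightarrow> real" where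
  "MI M b X Y = prob_space.mutual_information M b
      (count_space (X ` space M)) (count_space (Y ` space M)) X Y"

definition same_law :: "'a measure \<Rightarrow> ('a \<Rightarrow> 'b) \<Rightarrow> ('a \<Rightarrow> 'b) \<Rightarrow> bool" where
  "same_law M X Y \<longleftrightarrow> (\<forall>x. measure M (X -` {x} \<inter> space M) = measure M (Y -` {x} \<inter> space M))"

definition tup :: "'i set \<Rightarrow> ('i \<Rightarrow> 'a \<Rightarrow> 'b) \<Rightarrow> 'a \<Rightarrow> ('i \<Rightarrow> 'b)" where
  "tup I X = (\<lambda>\<omega>. restrict (\<lambda>i. X i \<omega>) I)"

definition RU :: "('a \<Rightarrow> 'c \<Rightarrow> 'r) \<Rightarrow> 'c set \<Rightarrow> 'a \<Rightarrow> ('c \<Rightarrow> 'r)" where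
  "RU RS S = (\<lambda>\<omega>. restrict (RS \<omega>) S)"

definition RSminusRU :: "('a \<Rightarrow> 'c \<Rightarrow> 'r) \<Rightarrow> 'c set \<Rightarrow> 'a \<Rightarrow> ('c \<Rightarrow> 'r)" where
  "RSminusRU RS S = (\<lambda>\<omega>. restrict (RS \<omega>) (- S))"

definition msg_space :: "nat \<Rightarrow> nat \<Rightarrow> (nat \<Rightarrow> nat \<Rightarrow> 'f) set" where
  "msg_space K L = PiE {1..K} (\<lambda>_. PiE {0..<L} (\<lambda>_. UNIV))"

text \<open>
  Parameters: probability space M; N databases (indices 1..N); K messages (1..K),
  each of length L over the finite field 'f (q = CARD('f), entropies in base q);
  W j = message j; RS = server-side common randomness with components indexed by 'c;
  the user holds the components in a subset S of cardinality m (admissible S: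
  card S = m); F = user's strategy randomness;
  Q n k S, A n k S = query to / answer of database n when retrieving W_k
  while holding R_U = RU RS S.
\<close>
definition valid_scheme ::
  "'a measure \<Rightarrow> nat \<Rightarrow> nat \<Rightarrow> nat \<Rightarrow> nat \<Rightarrow>
   (nat \<Rightarrow> 'a \<Rightarrow> (nat \<Rightarrow> 'f::{finite,field})) \<Rightarrow> ('a \<Rightarrow> ('c::finite \<Rightarrow> 'r)) \<Rightarrow>
   ('a \<Rightarrow> 'g) \<Rightarrow> (nat \<Rightarrow> nat \<Rightarrow> 'c set \<Rightarrow> 'a \<Rightarrow> 'q) \<Rightarrow>
   (nat \<Rightarrow> nat \<Rightarrow> 'c set \<Rightarrow> 'a \<Rightarrow> 'ans) \<Rightarrow> bool" where
  "valid_scheme M N K L m W RS F Q A \<longleftrightarrow>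
    (let b = real CARD('f);
         Adm = {S. card S = m};
         WW = tup {1..K} W in
    prob_space M \<and>
    \<comment> \<open>all random variables are discrete (finite range)\<close>
    (\<forall>j\<in>{1..K}. simple_function M (W j)) \<and> simple_function M RS \<and> simple_function M F \<and>
    (\<forall>n\<in>{1..N}. \<forall>k\<in>{1..K}. \<forall>S\<in>Adm. simple_function M (Q n k S) \<and> simple_function M (A n k S)) \<and>
    \<comment> \<open>messages: K L i.i.d. uniform symbols of 'f\<close>
    (\<forall>\<omega>\<in>space M. WW \<omega> \<in> msg_space K L) \<and>
    (\<forall>w\<in>msg_space K L. measure M (WW -` {w} \<inter> space M) = 1 / real (card (msg_space K L :: (nat \<Rightarrow> nat \<Rightarrow> 'f) set))) \<and>
    \<comment> \<open>H(R_S minus R_U) = H(R_S) - H(R_U)\<close>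
    (\<forall>S\<in>Adm. Ent M b (RSminusRU RS S) = Ent M b RS - Ent M b (RU RS S)) \<and>
    \<comment> \<open>(C1)\<close>
    (\<forall>S\<in>Adm. MI M b WW (\<lambda>\<omega>. (F \<omega>, RS \<omega>, RU RS S \<omega>)) = 0) \<and>
    \<comment> \<open>(C2)\<close>
    (\<forall>k\<in>{1..K}. \<forall>S\<in>Adm.
       MI M b (tup {1..N} (\<lambda>n. Q n k S)) (\<lambda>\<omega>. (WW \<omega>, RSminusRU RS S \<omega>)) = 0) \<and>
    \<comment> \<open>(C3)\<close>
    (\<forall>k\<in>{1..K}. \<forall>S\<in>Adm. CEnt M b (tup {1..N} (\<lambda>n. Q n k S)) F = 0) \<and>
    \<comment> \<open>(C4)\<close>
    (\<forall>k\<in>{1..K}. \<forall>n\<in>{1..N}. \<forall>S\<in>Adm.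
       CEnt M b (A n k S) (\<lambda>\<omega>. (Q n k S \<omega>, WW \<omega>, RS \<omega>)) = 0) \<and>
    \<comment> \<open>(C5) correctness\<close>
    (\<forall>k\<in>{1..K}. \<forall>S\<in>Adm.
       CEnt M b (W k) (\<lambda>\<omega>. (F \<omega>, tup {1..N} (\<lambda>n. A n k S) \<omega>, RU RS S \<omega>)) = 0) \<and>
    \<comment> \<open>(C6) user privacy\<close>
    (\<forall>k\<in>{1..K}. \<forall>k'\<in>{1..K}. \<forall>n\<in>{1..N}. \<forall>S\<in>Adm. \<exists>S'\<in>Adm.
       Ent M b (RU RS S') = Ent M b (RU RS S) \<and>
       same_law M (\<lambda>\<omega>. (Q n k S \<omega>, A n k S \<omega>, WW \<omega>, RS \<omega>))
                  (\<lambda>\<omega>. (Q n k' S' \<omega>, A n k' S' \<omega>, WW \<omega>, RS \<omega>))) \<and>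
    \<comment> \<open>(C7) database privacy\<close>
    (\<forall>k\<in>{1..K}. \<forall>S\<in>Adm.
       MI M b (tup ({1..K} - {k}) W) (\<lambda>\<omega>. (F \<omega>, tup {1..N} (\<lambda>n. A n k S) \<omega>, RU RS S \<omega>)) = 0) \<and>
    \<comment> \<open>(C8)\<close>
    (\<forall>k\<in>{1..K}. \<forall>S\<in>Adm.
       MI M b (RSminusRU RS S) (\<lambda>\<omega>. (F \<omega>, tup {1..N} (\<lambda>n. A n k S) \<omega>, W k \<omega>, RU RS S \<omega>)) = 0))"

end

theory Submission
  imports Defs
begin


context information_space begin

abbreviation PX :: "('a \<Rightarrow> 'x) \<Rightarrow> 'x \<Rightarrow> real" where
  "PX X x \<equiv> prob (X -` {x} \<inter> space M)"

lemma H_formula: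
  assumes "simple_function M X"
  shows "\<H>(X) = - (\<Sum>x\<in>X`space M. PX X x * log b (PX X x))"
  by (rule entropy_simple_distributed[OF simple_distributedI[OF assms measure_nonneg refl]])

lemma P_comp:
  assumes X: "simple_function M X"
  shows "PX (\<lambda>\<omega>. g (X \<omega>)) s = (\<Sum>t\<in>{t\<in>X`space M. g t = s}. PX X t)"
proof -
  have "(\<lambda>\<omega>. g (X \<omega>)) -` {s} \<inter> space M = (\<Union>t\<in>{t\<in>X`space M. g t = s}. X -` {t} \<inter> space M)"
    by auto
  moreover have "prob (\<Union>t\<in>{t\<in>X`space M. g t = s}. X -` {t} \<inter> space M) = (\<Sum>t\<in>{t\<in>X`space M. g t = s}. PX X t)"
    apply (rule finite_measure_finite_Union)
    using simple_functionD[OF X] by (auto simp: disjoint_family_on_def)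
  ultimately show ?thesis by simp
qed

lemma group_sum:
  assumes X: "simple_function M X"
  shows "(\<Sum>t\<in>X`space M. PX X t * h (g t)) = (\<Sum>s\<in>(\<lambda>\<omega>. g (X \<omega>))`space M. PX (\<lambda>\<omega>. g (X \<omega>)) s * h s)"
proof -
  have fin: "finite (X`space M)" using simple_functionD[OF X] by simp
  have "(\<Sum>t\<in>X`space M. PX X t * h (g t)) = (\<Sum>s\<in>g`X`space M. \<Sum>t\<in>{t\<in>X`space M. g t = s}. PX X t * h (g t))"
    by (rule sum.image_gen[OF fin])
  also have "\<dots> = (\<Sum>s\<in>g`X`space M. (\<Sum>t\<in>{t\<in>X`space M. g t = s}. PX X t) * h s)"
    by (auto simp: sum_distrib_right intro!: sum.cong)
  also have "\<dots> = (\<Sum>s\<in>(\<lambda>\<omega>. g (X \<omega>))`space M. PX (\<lambda>\<omega>. g (X \<omega>)) s * h s)"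
    by (simp add: P_comp[OF X] image_image)
  finally show ?thesis .
qed

lemma H_formula2:
  assumes "simple_function M X"
  shows "\<H>(\<lambda>\<omega>. g (X \<omega>)) = - (\<Sum>t\<in>X`space M. PX X t * log b (PX (\<lambda>\<omega>. g (X \<omega>)) (g t)))"
  using H_formula[of "\<lambda>\<omega>. g (X \<omega>)"] group_sum[OF assms, of "\<lambda>s. log b (PX (\<lambda>\<omega>. g (X \<omega>)) s)" g] assms
  by (simp add: simple_function_compose1[OF assms])

end


context information_space begin

lemma H_cong:
  assumes "simple_function M X" "\<And>\<omega>. \<omega> \<in> space M \<Longrightarrow> X \<omega> = X' \<omega>"
  shows "\<H>(X) = \<H>(X')"
proof -
  have sf: "simple_function M X'" using assms simple_function_cong by blast
  have im: "X`space M = X'`space M" using assms(2) by (auto simp: image_def)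
  have "\<And>x. X -` {x} \<inter> space M = X' -` {x} \<inter> space M" using assms(2) by auto
  then show ?thesis using H_formula[OF assms(1)] H_formula[OF sf] im by simp
qed

lemma H_mono:
  assumes Y: "simple_function M Y" and f: "\<And>\<omega>. \<omega> \<in> space M \<Longrightarrow> X \<omega> = f (Y \<omega>)"
  shows "\<H>(X) \<le> \<H>(Y)"
proof -
  have "\<H>(f \<circ> Y) = \<H>(X)" by (rule H_cong) (use Y f in auto)
  then show ?thesis using entropy_data_processing[OF Y, of f] by simp
qed

lemma H_eqI:
  assumes X: "simple_function M X" and Y: "simple_function M Y"
    and f: "\<And>\<omega>. \<omega> \<in> space M \<Longrightarrow> X \<omega> = f (Y \<omega>)"
    and g: "\<And>\<omega>. \<omega> \<in> space M \<Longrightarrow> Y \<omega> = g (X \<omega>)"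
  shows "\<H>(X) = \<H>(Y)"
  using H_mono[of Y X f] H_mono[of X Y g] X Y f g by fastforce

lemma H_nonneg:
  assumes X: "simple_function M X"
  shows "0 \<le> \<H>(X)"
proof -
  have "PX X x * log b (PX X x) \<le> 0" for x
  proof (cases "PX X x = 0")
    case False
    then have "0 < PX X x" using measure_nonneg[of M] by (simp add: order_less_le)
    moreover have "PX X x \<le> 1" by simp
    ultimately have "log b (PX X x) \<le> 0" using b_gt_1 by simp
    then show ?thesis using \<open>0 < PX X x\<close> by (simp add: mult_nonneg_nonpos)
  qed simp
  then have "(\<Sum>x\<in>X`space M. PX X x * log b (PX X x)) \<le> 0" by (intro sum_nonpos) auto
  then show ?thesis using H_formula[OF X] by simp
qed

lemma submod:
  assumes X: "simple_function M X" and Y: "simple_function M Y" and Z: "simple_function M Z"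
  shows "\<H>(\<lambda>\<omega>. (X \<omega>, Y \<omega>, Z \<omega>)) + \<H>(Z) \<le> \<H>(\<lambda>\<omega>. (X \<omega>, Z \<omega>)) + \<H>(\<lambda>\<omega>. (Y \<omega>, Z \<omega>))"
proof -
  let ?XYZ = "\<lambda>\<omega>. (X \<omega>, Y \<omega>, Z \<omega>)" and ?XZ = "\<lambda>\<omega>. (X \<omega>, Z \<omega>)" and ?YZ = "\<lambda>\<omega>. (Y \<omega>, Z \<omega>)"
  have sXYZ: "simple_function M ?XYZ" using X Y Z by simp
  have sXZ: "simple_function M ?XZ" using X Z by simp
  have sYZ: "simple_function M ?YZ" using Y Z by simp
  have eq: "\<I>(X ; Y | Z) = (\<Sum>(x, y, z)\<in>?XYZ`space M. PX ?XYZ (x, y, z) * log b (PX ?XYZ (x, y, z) / (PX ?XZ (x, z) * (PX ?YZ (y,z) / PX Z z))))"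
    by (rule conditional_mutual_information_eq)
       (rule simple_distributedI, (simp_all add: X Y Z measure_nonneg))+
  have trm: "PX ?XYZ t * log b (PX ?XYZ t / (PX ?XZ (fst t, snd (snd t)) * (PX ?YZ (fst (snd t), snd (snd t)) / PX Z (snd (snd t)))))
     = PX ?XYZ t * log b (PX ?XYZ t) - PX ?XYZ t * log b (PX ?XZ (fst t, snd (snd t)))
       - PX ?XYZ t * log b (PX ?YZ (fst (snd t), snd (snd t))) + PX ?XYZ t * log b (PX Z (snd (snd t)))" for t
  proof (cases "PX ?XYZ t = 0")
    case False
    obtain x y z where t: "t = (x, y, z)" by (cases t) auto
    have p: "0 < PX ?XYZ t" using False measure_nonneg[of M] by (simp add: order_less_le)
    have "PX ?XYZ t \<le> PX ?XZ (x, z)"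
      by (rule finite_measure_mono) (use sXZ in \<open>auto simp: t simple_functionD\<close>)
    moreover have "PX ?XYZ t \<le> PX ?YZ (y, z)"
      by (rule finite_measure_mono) (use sYZ in \<open>auto simp: t simple_functionD\<close>)
    moreover have "PX ?XYZ t \<le> PX Z z"
      by (rule finite_measure_mono) (use Z in \<open>auto simp: t simple_functionD\<close>)
    ultimately have pos: "0 < PX ?XZ (x, z)" "0 < PX ?YZ (y, z)" "0 < PX Z z" using p by linarith+
    show ?thesis using p pos b_gt_1
      by (simp add: t log_divide log_mult algebra_simps)
  qed simp
  have fin: "finite (?XYZ`space M)" using sXYZ simple_functionD by blast
  have I: "\<I>(X ; Y | Z) = (\<Sum>t\<in>?XYZ`space M. PX ?XYZ t * log b (PX ?XYZ t))
      - (\<Sum>t\<in>?XYZ`space M. PX ?XYZ t * log b (PX ?XZ (fst t, snd (snd t))))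
      - (\<Sum>t\<in>?XYZ`space M. PX ?XYZ t * log b (PX ?YZ (fst (snd t), snd (snd t))))
      + (\<Sum>t\<in>?XYZ`space M. PX ?XYZ t * log b (PX Z (snd (snd t))))"
  proof -
    have "\<I>(X ; Y | Z) = (\<Sum>t\<in>?XYZ`space M. PX ?XYZ t * log b (PX ?XYZ t / (PX ?XZ (fst t, snd (snd t)) * (PX ?YZ (fst (snd t), snd (snd t)) / PX Z (snd (snd t))))))"
      unfolding eq by (intro sum.cong refl) (auto simp: split_beta)
    also have "\<dots> = (\<Sum>t\<in>?XYZ`space M. PX ?XYZ t * log b (PX ?XYZ t) - PX ?XYZ t * log b (PX ?XZ (fst t, snd (snd t)))
       - PX ?XYZ t * log b (PX ?YZ (fst (snd t), snd (snd t))) + PX ?XYZ t * log b (PX Z (snd (snd t))))"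
      by (rule sum.cong[OF refl trm])
    finally show ?thesis by (simp only: sum.distrib sum_subtractf)
  qed
  have g1: "(\<Sum>t\<in>?XYZ`space M. PX ?XYZ t * log b (PX ?XZ (fst t, snd (snd t)))) = - \<H>(?XZ)"
    using group_sum[OF sXYZ, of "\<lambda>s. log b (PX ?XZ s)" "\<lambda>t. (fst t, snd (snd t))"] H_formula[OF sXZ]
    by simp
  have g2: "(\<Sum>t\<in>?XYZ`space M. PX ?XYZ t * log b (PX ?YZ (fst (snd t), snd (snd t)))) = - \<H>(?YZ)"
    using group_sum[OF sXYZ, of "\<lambda>s. log b (PX ?YZ s)" "\<lambda>t. (fst (snd t), snd (snd t))"] H_formula[OF sYZ]
    by simp
  have g3: "(\<Sum>t\<in>?XYZ`space M. PX ?XYZ t * log b (PX Z (snd (snd t)))) = - \<H>(Z)"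
    using group_sum[OF sXYZ, of "\<lambda>s. log b (PX Z s)" "\<lambda>t. snd (snd t)"] H_formula[OF Z]
    by simp
  have "0 \<le> \<I>(X ; Y | Z)" by (rule conditional_mutual_information_nonneg[OF X Y Z])
  then show ?thesis unfolding I g1 g2 g3 using H_formula[OF sXYZ] by simp
qed

end


context information_space begin

lemma law_sum:
  assumes X: "simple_function M X" and Y: "simple_function M Y" and L: "same_law M X Y"
  shows "(\<Sum>t\<in>X`space M. PX X t * \<phi> t) = (\<Sum>t\<in>Y`space M. PX Y t * \<phi> t)"
proof -
  let ?U = "X`space M \<union> Y`space M"
  have fin: "finite ?U" using simple_functionD(1)[OF X] simple_functionD(1)[OF Y] by simp
  have e: "PX X t = PX Y t" for t using L by (simp add: same_law_def)
  have "(\<Sum>t\<in>X`space M. PX X t * \<phi> t) = (\<Sum>t\<in>?U. PX X t * \<phi> t)"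
  proof (rule sum.mono_neutral_left[OF fin])
    show "\<forall>i\<in>?U - X`space M. PX X i * \<phi> i = 0"
    proof
      fix i assume "i \<in> ?U - X`space M"
      then have "X -` {i} \<inter> space M = {}" by auto
      then show "PX X i * \<phi> i = 0" by simp
    qed
  qed auto
  also have "\<dots> = (\<Sum>t\<in>?U. PX Y t * \<phi> t)" by (simp add: e)
  also have "\<dots> = (\<Sum>t\<in>Y`space M. PX Y t * \<phi> t)"
  proof (rule sum.mono_neutral_right[OF fin])
    show "\<forall>i\<in>?U - Y`space M. PX Y i * \<phi> i = 0"
    proof
      fix i assume "i \<in> ?U - Y`space M"
      then have "Y -` {i} \<inter> space M = {}" by auto
      then show "PX Y i * \<phi> i = 0" by simp
    qed
  qed auto
  finally show ?thesis .
qed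

lemma P_comp_ind:
  assumes X: "simple_function M X"
  shows "PX (\<lambda>\<omega>. g (X \<omega>)) s = (\<Sum>t\<in>X`space M. PX X t * (if g t = s then 1 else 0))"
  unfolding P_comp[OF X]
  using simple_functionD(1)[OF X]
  by (simp add: sum.inter_filter[symmetric] mult.commute if_distrib[of "\<lambda>x. x * _"] cong: if_cong)

lemma law_H:
  assumes X: "simple_function M X" and Y: "simple_function M Y" and L: "same_law M X Y"
  shows "\<H>(\<lambda>\<omega>. g (X \<omega>)) = \<H>(\<lambda>\<omega>. g (Y \<omega>))"
proof -
  have p: "PX (\<lambda>\<omega>. g (X \<omega>)) s = PX (\<lambda>\<omega>. g (Y \<omega>)) s" for s
    unfolding P_comp_ind[OF X] P_comp_ind[OF Y] by (rule law_sum[OF X Y L])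
  show ?thesis
    unfolding H_formula2[OF X] H_formula2[OF Y] p
    using law_sum[OF X Y L] by simp
qed

end


context information_space begin

definition det :: "('a \<Rightarrow> 'x) \<Rightarrow> ('a \<Rightarrow> 'y) \<Rightarrow> bool" where
  "det X Y \<longleftrightarrow> \<H>(\<lambda>\<omega>. (X \<omega>, Y \<omega>)) = \<H>(Y)"

lemma H_swap:
  assumes "simple_function M X" "simple_function M Y"
  shows "\<H>(\<lambda>\<omega>. (X \<omega>, Y \<omega>)) = \<H>(\<lambda>\<omega>. (Y \<omega>, X \<omega>))"
  by (rule H_eqI[where f="\<lambda>(a,b). (b,a)" and g="\<lambda>(a,b). (b,a)"]) (use assms in auto)

lemma H_pair_ge1:
  assumes "simple_function M X" "simple_function M Y"
  shows "\<H>(X) \<le> \<H>(\<lambda>\<omega>. (X \<omega>, Y \<omega>))"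
  by (rule H_mono[where f=fst]) (use assms in auto)

lemma H_pair_ge2:
  assumes "simple_function M X" "simple_function M Y"
  shows "\<H>(Y) \<le> \<H>(\<lambda>\<omega>. (X \<omega>, Y \<omega>))"
  by (rule H_mono[where f=snd]) (use assms in auto)

lemma subadd:
  assumes X: "simple_function M X" and Y: "simple_function M Y"
  shows "\<H>(\<lambda>\<omega>. (X \<omega>, Y \<omega>)) \<le> \<H>(X) + \<H>(Y)"
  using entropy_chain_rule[OF X Y] conditional_entropy_less_eq_entropy[OF Y X] by simp

lemma det_fdep:
  assumes X: "simple_function M X" and Y: "simple_function M Y"
    and f: "\<And>\<omega>. \<omega> \<in> space M \<Longrightarrow> X \<omega> = f (Y \<omega>)"
  shows "det X Y"
  unfolding det_def
  by (rule H_eqI[where g=snd and f="\<lambda>y. (f y, y)"]) (use X Y f in auto)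

lemma det_refl: "simple_function M X \<Longrightarrow> det X X"
  by (rule det_fdep[where f=id]) auto

lemma det_aug:
  assumes X: "simple_function M X" and Y: "simple_function M Y" and C: "simple_function M C"
    and d: "det X Y" and f: "\<And>\<omega>. \<omega> \<in> space M \<Longrightarrow> Y \<omega> = f (C \<omega>)"
  shows "det X C"
proof -
  have s: "\<H>(\<lambda>\<omega>. (X \<omega>, C \<omega>, Y \<omega>)) + \<H>(Y) \<le> \<H>(\<lambda>\<omega>. (X \<omega>, Y \<omega>)) + \<H>(\<lambda>\<omega>. (C \<omega>, Y \<omega>))"
    by (rule submod[OF X C Y])
  have e1: "\<H>(\<lambda>\<omega>. (C \<omega>, Y \<omega>)) = \<H>(C)"
    by (rule H_eqI[where g=fst and f="\<lambda>c. (c, f c)"]) (use C Y f in auto)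
  have e2: "\<H>(\<lambda>\<omega>. (X \<omega>, C \<omega>, Y \<omega>)) = \<H>(\<lambda>\<omega>. (X \<omega>, C \<omega>))"
    by (rule H_eqI[where f="\<lambda>(x,c). (x,c,f c)" and g="\<lambda>(x,c,y). (x,c)"]) (use X C Y f in auto)
  have "\<H>(\<lambda>\<omega>. (X \<omega>, C \<omega>)) \<le> \<H>(C)" using s e1 e2 d unfolding det_def by simp
  moreover have "\<H>(C) \<le> \<H>(\<lambda>\<omega>. (X \<omega>, C \<omega>))" by (rule H_pair_ge2[OF X C])
  ultimately show ?thesis unfolding det_def by simp
qed

lemma det_trans:
  assumes X: "simple_function M X" and Y: "simple_function M Y" and Z: "simple_function M Z"
    and d1: "det X Y" and d2: "det Y Z"
  shows "det X Z"
proof -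
  let ?YZ = "\<lambda>\<omega>. (Y \<omega>, Z \<omega>)"
  have "det X ?YZ" by (rule det_aug[OF X Y _ d1, where f=fst]) (use Y Z in auto)
  then have a: "\<H>(\<lambda>\<omega>. (X \<omega>, ?YZ \<omega>)) = \<H>(Z)" using d2 unfolding det_def by simp
  have "\<H>(\<lambda>\<omega>. (X \<omega>, Z \<omega>)) \<le> \<H>(\<lambda>\<omega>. (X \<omega>, ?YZ \<omega>))"
    by (rule H_mono[where f="\<lambda>(x,y,z). (x,z)"]) (use X Y Z in auto)
  then have "\<H>(\<lambda>\<omega>. (X \<omega>, Z \<omega>)) \<le> \<H>(Z)" using a by simp
  with H_pair_ge2[OF X Z] show ?thesis unfolding det_def by simp
qed

lemma det_pair:
  assumes X: "simple_function M X" and Y: "simple_function M Y" and C: "simple_function M C"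
    and d1: "det X C" and d2: "det Y C"
  shows "det (\<lambda>\<omega>. (X \<omega>, Y \<omega>)) C"
proof -
  have s: "\<H>(\<lambda>\<omega>. (X \<omega>, Y \<omega>, C \<omega>)) + \<H>(C) \<le> \<H>(\<lambda>\<omega>. (X \<omega>, C \<omega>)) + \<H>(\<lambda>\<omega>. (Y \<omega>, C \<omega>))"
    by (rule submod[OF X Y C])
  have e: "\<H>(\<lambda>\<omega>. (X \<omega>, Y \<omega>, C \<omega>)) = \<H>(\<lambda>\<omega>. ((X \<omega>, Y \<omega>), C \<omega>))"
    by (rule H_eqI[where f="\<lambda>((x,y),c). (x,y,c)" and g="\<lambda>(x,y,c). ((x,y),c)"]) (use X Y C in auto)
  have "\<H>(\<lambda>\<omega>. ((X \<omega>, Y \<omega>), C \<omega>)) \<le> \<H>(C)" using s e d1 d2 unfolding det_def by simp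
  moreover have "\<H>(C) \<le> \<H>(\<lambda>\<omega>. ((X \<omega>, Y \<omega>), C \<omega>))" by (rule H_pair_ge2) (use X Y C in auto)
  ultimately show ?thesis unfolding det_def by simp
qed

lemma det_fst:
  assumes X: "simple_function M X" and A: "simple_function M A" and B: "simple_function M B"
    and d: "det X A"
  shows "det X (\<lambda>\<omega>. (A \<omega>, B \<omega>))"
  by (rule det_aug[OF X A _ d, where f=fst]) (use A B in auto)

lemma det_snd:
  assumes X: "simple_function M X" and A: "simple_function M A" and B: "simple_function M B"
    and d: "det X B"
  shows "det X (\<lambda>\<omega>. (A \<omega>, B \<omega>))"
  by (rule det_aug[OF X B _ d, where f=snd]) (use A B in auto)

lemma det_H_le:
  assumes X: "simple_function M X" and Y: "simple_function M Y" and d: "det X Y"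
  shows "\<H>(X) \<le> \<H>(Y)"
  using H_pair_ge1[OF X Y] d unfolding det_def by simp

lemma det_H_eq:
  assumes X: "simple_function M X" and Y: "simple_function M Y" and d1: "det X Y" and d2: "det Y X"
  shows "\<H>(X) = \<H>(Y)"
  using det_H_le[OF X Y d1] det_H_le[OF Y X d2] by simp

lemma cond_reduce:
  assumes X: "simple_function M X" and C: "simple_function M C" and C': "simple_function M C'"
    and d: "det C' C"
  shows "\<H>(\<lambda>\<omega>. (X \<omega>, C \<omega>)) - \<H>(C) \<le> \<H>(\<lambda>\<omega>. (X \<omega>, C' \<omega>)) - \<H>(C')"
proof -
  have s: "\<H>(\<lambda>\<omega>. (X \<omega>, C \<omega>, C' \<omega>)) + \<H>(C') \<le> \<H>(\<lambda>\<omega>. (X \<omega>, C' \<omega>)) + \<H>(\<lambda>\<omega>. (C \<omega>, C' \<omega>))"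
    by (rule submod[OF X C C'])
  have "det C' (\<lambda>\<omega>. (X \<omega>, C \<omega>))" by (rule det_snd[OF C' X C d])
  then have e0: "\<H>(\<lambda>\<omega>. (C' \<omega>, X \<omega>, C \<omega>)) = \<H>(\<lambda>\<omega>. (X \<omega>, C \<omega>))"
    unfolding det_def .
  have e1: "\<H>(\<lambda>\<omega>. (X \<omega>, C \<omega>, C' \<omega>)) = \<H>(\<lambda>\<omega>. (X \<omega>, C \<omega>))"
    unfolding e0[symmetric]
    by (rule H_eqI[where g="\<lambda>(x,c,c'). (c',x,c)" and f="\<lambda>(c',x,c). (x,c,c')"]) (use X C C' in auto)
  have e2: "\<H>(\<lambda>\<omega>. (C \<omega>, C' \<omega>)) = \<H>(C)"
    using d H_swap[OF C' C] unfolding det_def by simp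
  show ?thesis using s e1 e2 by simp
qed

end


lemma sf_tup:
  assumes fin: "finite I" and sf: "\<And>i. i \<in> I \<Longrightarrow> simple_function M (X i)"
  shows "simple_function M (tup I X)"
  unfolding simple_function_def
proof
  have "tup I X ` space M \<subseteq> PiE I (\<lambda>i. X i ` space M)"
    by (auto simp: tup_def)
  moreover have "finite (PiE I (\<lambda>i. X i ` space M))"
    using fin sf by (intro finite_PiE) (auto simp: simple_functionD)
  ultimately show "finite (tup I X ` space M)" by (rule finite_subset)
next
  show "\<forall>x\<in>tup I X ` space M. tup I X -` {x} \<inter> space M \<in> sets M"
  proof
    fix v assume "v \<in> tup I X ` space M"
    then obtain \<omega>0 where v: "v = tup I X \<omega>0" by auto
    have "tup I X -` {v} \<inter> space M = {\<omega>\<in>space M. \<forall>i\<in>I. X i \<omega> = v i}"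
      by (auto simp: v tup_def restrict_def fun_eq_iff) metis
    also have "\<dots> \<in> sets M"
    proof (rule sets.sets_Collect_finite_All[OF _ fin])
      fix i assume i: "i \<in> I"
      have "{\<omega>\<in>space M. X i \<omega> = v i} = X i -` {v i} \<inter> space M" by auto
      also have "\<dots> \<in> sets M"
      proof (cases "v i \<in> X i ` space M")
        case True then show ?thesis using simple_functionD(2)[OF sf[OF i]] by blast
      next
        case False then have "X i -` {v i} \<inter> space M = {}" by (auto simp: image_iff)
        then show ?thesis by simp
      qed
      finally show "{\<omega>\<in>space M. X i \<omega> = v i} \<in> sets M" .
    qed
    finally show "tup I X -` {v} \<inter> space M \<in> sets M" .
  qed
qed

context information_space begin

lemma CE:
  assumes X: "simple_function M X" and Y: "simple_function M Y"
  shows "\<H>(X | Y) = \<H>(\<lambda>\<omega>. (Y \<omega>, X \<omega>)) - \<H>(Y)"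
  using entropy_chain_rule[OF Y X] by simp

lemma MIe:
  assumes X: "simple_function M X" and Y: "simple_function M Y"
  shows "\<I>(X ; Y) = \<H>(X) + \<H>(Y) - \<H>(\<lambda>\<omega>. (Y \<omega>, X \<omega>))"
  using mutual_information_eq_entropy_conditional_entropy[OF X Y] CE[OF X Y] by simp

end


locale scheme = information_space M b for M :: "'a measure" and b :: real +
  fixes N K L m :: nat and W :: "nat \<Rightarrow> 'a \<Rightarrow> (nat \<Rightarrow> 'f::{finite,field})"
    and RS :: "'a \<Rightarrow> ('c::finite \<Rightarrow> 'r)" and F :: "'a \<Rightarrow> 'g"
    and Q :: "nat \<Rightarrow> nat \<Rightarrow> 'c set \<Rightarrow> 'a \<Rightarrow> 'q"
    and A :: "nat \<Rightarrow> nat \<Rightarrow> 'c set \<Rightarrow> 'a \<Rightarrow> 'ans"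
  assumes b_def: "b = real CARD('f)" and N1: "1 \<le> N" and K2: "2 \<le> K" and L1: "1 \<le> L"
    and VS: "valid_scheme M N K L m W RS F Q A"
begin

abbreviation "WW \<equiv> tup {1..K} W"
abbreviation "WT T \<equiv> tup T W"
abbreviation "AT k S \<equiv> tup {1..N} (\<lambda>n. A n k S)"
abbreviation "QT k S \<equiv> tup {1..N} (\<lambda>n. Q n k S)"
abbreviation "U S \<equiv> RU RS S"
abbreviation "V S \<equiv> RSminusRU RS S"

lemmas VS' = VS[unfolded valid_scheme_def Let_def b_def[symmetric] Ent_def CEnt_def MI_def]

lemma sfW: "j \<in> {1..K} \<Longrightarrow> simple_function M (W j)" using VS' by auto
lemma sfRS: "simple_function M RS" using VS' by auto
lemma sfF: "simple_function M F" using VS' by auto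
lemma sfQ: "n \<in> {1..N} \<Longrightarrow> k \<in> {1..K} \<Longrightarrow> card S = m \<Longrightarrow> simple_function M (Q n k S)" using VS' by auto
lemma sfA: "n \<in> {1..N} \<Longrightarrow> k \<in> {1..K} \<Longrightarrow> card S = m \<Longrightarrow> simple_function M (A n k S)" using VS' by auto
lemma WWsp: "\<omega> \<in> space M \<Longrightarrow> WW \<omega> \<in> msg_space K L" using VS' by auto
lemma WWu: "w \<in> msg_space K L \<Longrightarrow> PX WW w = 1 / real (card (msg_space K L :: (nat \<Rightarrow> nat \<Rightarrow> 'f) set))" using VS' by auto
lemma splitH: "card S = m \<Longrightarrow> \<H>(V S) = \<H>(RS) - \<H>(U S)" using VS' by auto
lemma C1: "card S = m \<Longrightarrow> \<I>(WW ; \<lambda>\<omega>. (F \<omega>, RS \<omega>, U S \<omega>)) = 0" using VS' by auto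
lemma C3: "k \<in> {1..K} \<Longrightarrow> card S = m \<Longrightarrow> \<H>(QT k S | F) = 0" using VS' by auto
lemma C4: "k \<in> {1..K} \<Longrightarrow> n \<in> {1..N} \<Longrightarrow> card S = m \<Longrightarrow> \<H>(A n k S | \<lambda>\<omega>. (Q n k S \<omega>, WW \<omega>, RS \<omega>)) = 0" using VS' by auto
lemma C5: "k \<in> {1..K} \<Longrightarrow> card S = m \<Longrightarrow> \<H>(W k | \<lambda>\<omega>. (F \<omega>, AT k S \<omega>, U S \<omega>)) = 0" using VS' by auto
lemma C6: "k \<in> {1..K} \<Longrightarrow> k' \<in> {1..K} \<Longrightarrow> n \<in> {1..N} \<Longrightarrow> card S = m \<Longrightarrow>
   \<exists>S'. card S' = m \<and> \<H>(U S') = \<H>(U S) \<and>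
     same_law M (\<lambda>\<omega>. (Q n k S \<omega>, A n k S \<omega>, WW \<omega>, RS \<omega>)) (\<lambda>\<omega>. (Q n k' S' \<omega>, A n k' S' \<omega>, WW \<omega>, RS \<omega>))"
  using VS' by auto
lemma C7: "k \<in> {1..K} \<Longrightarrow> card S = m \<Longrightarrow> \<I>(tup ({1..K} - {k}) W ; \<lambda>\<omega>. (F \<omega>, AT k S \<omega>, U S \<omega>)) = 0"
  using VS' by auto

end


context scheme begin

lemma sfWT:
  assumes T: "T \<subseteq> {1..K}" shows "simple_function M (WT T)"
proof (rule sf_tup)
  show "finite T" using T finite_subset by blast
  fix i assume "i \<in> T" then show "simple_function M (W i)" using T sfW by blast
qed
lemma sfWW: "simple_function M WW" by (rule sfWT) simp
lemma sfAT: "k \<in> {1..K} \<Longrightarrow> card S = m \<Longrightarrow> simple_function M (AT k S)"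
  by (rule sf_tup) (auto intro: sfA)
lemma sfQT: "k \<in> {1..K} \<Longrightarrow> card S = m \<Longrightarrow> simple_function M (QT k S)"
  by (rule sf_tup) (auto intro: sfQ)
lemma sfU: "simple_function M (U S)"
  unfolding RU_def using simple_function_compose1[OF sfRS, of "\<lambda>r. restrict r S"] by simp
lemma sfV: "simple_function M (V S)"
  unfolding RSminusRU_def using simple_function_compose1[OF sfRS, of "\<lambda>r. restrict r (- S)"] by simp

lemma b_gt1: "1 < b" by (rule b_gt_1)

lemma W_in: "\<omega> \<in> space M \<Longrightarrow> i \<in> {1..K} \<Longrightarrow> W i \<omega> \<in> PiE {0..<L} (\<lambda>_. UNIV)"
  using WWsp[of \<omega>] unfolding msg_space_def tup_def by (auto dest: PiE_mem)

lemma card_block: "card (PiE {0..<L} (\<lambda>_. UNIV :: 'f set)) = CARD('f) ^ L"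
  by (simp add: card_PiE)

lemma card_msg: "card (msg_space K L :: (nat \<Rightarrow> nat \<Rightarrow> 'f) set) = CARD('f) ^ (L * K)"
  unfolding msg_space_def by (simp add: card_PiE card_block power_mult)

lemma log_b_pow: "log b (real (CARD('f) ^ n)) = real n"
  using b_gt1 unfolding b_def by (simp add: log_nat_power)

lemma H_WW: "\<H>(WW) = real K * real L"
proof -
  let ?c = "card (msg_space K L :: (nat \<Rightarrow> nat \<Rightarrow> 'f) set)"
  have cpos: "0 < ?c" unfolding card_msg by simp
  have im: "WW ` space M = msg_space K L"
  proof
    show "WW ` space M \<subseteq> msg_space K L" using WWsp by auto
    show "msg_space K L \<subseteq> WW ` space M"
    proof
      fix w :: "nat \<Rightarrow> nat \<Rightarrow> 'f" assume w: "w \<in> msg_space K L"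
      have "PX WW w \<noteq> 0" using WWu[OF w] cpos by simp
      then have "WW -` {w} \<inter> space M \<noteq> {}" by auto
      then show "w \<in> WW ` space M" by auto
    qed
  qed
  have "\<H>(WW) = - (\<Sum>w\<in>WW`space M. PX WW w * log b (PX WW w))" by (rule H_formula[OF sfWW])
  also have "\<dots> = - (\<Sum>w\<in>(msg_space K L :: (nat \<Rightarrow> nat \<Rightarrow> 'f) set). (1 / real ?c) * log b (1 / real ?c))"
    unfolding im
  proof (rule arg_cong[where f=uminus], rule sum.cong[OF refl])
    fix w :: "nat \<Rightarrow> nat \<Rightarrow> 'f" assume "w \<in> msg_space K L"
    from WWu[OF this] show "PX WW w * log b (PX WW w) = (1 / real ?c) * log b (1 / real ?c)" by simp
  qed
  also have "\<dots> = log b (real ?c)"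
    using cpos b_gt1 by (simp add: log_divide)
  also have "\<dots> = real K * real L" unfolding card_msg log_b_pow by simp
  finally show ?thesis .
qed

lemma H_WT_le:
  assumes T: "T \<subseteq> {1..K}"
  shows "\<H>(WT T) \<le> real (card T) * real L"
proof -
  have "\<H>(WT T) \<le> log b (real (card (WT T ` space M)))"
    by (rule entropy_le_card[OF simple_distributedI[OF sfWT[OF T] measure_nonneg refl]])
  also have "\<dots> \<le> log b (real (CARD('f) ^ (L * card T)))"
  proof -
    have sub: "WT T ` space M \<subseteq> PiE T (\<lambda>_. PiE {0..<L} (\<lambda>_. UNIV :: 'f set))"
    proof (rule image_subsetI)
      fix \<omega> assume \<omega>: "\<omega> \<in> space M"
      have "\<forall>i\<in>T. W i \<omega> \<in> PiE {0..<L} (\<lambda>_. UNIV :: 'f set)" using W_in T \<omega> by blast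
      then show "WT T \<omega> \<in> PiE T (\<lambda>_. PiE {0..<L} (\<lambda>_. UNIV :: 'f set))"
        unfolding tup_def by (simp only: restrict_PiE_iff)
    qed
    have finT: "finite T" using T finite_subset by blast
    have "card (WT T ` space M) \<le> card (PiE T (\<lambda>_. PiE {0..<L} (\<lambda>_. UNIV :: 'f set)))"
      by (rule card_mono[OF _ sub]) (simp add: finT finite_PiE)
    also have "\<dots> = CARD('f) ^ (L * card T)"
      using finT by (simp add: card_PiE card_block power_mult)
    finally have le: "card (WT T ` space M) \<le> CARD('f) ^ (L * card T)" .
    have ne: "WT T ` space M \<noteq> {}" using not_empty by auto
    have fin: "finite (WT T ` space M)" using simple_functionD(1)[OF sfWT[OF T]] .
    have "0 < card (WT T ` space M)" using ne fin by (simp add: card_gt_0_iff)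
    then show ?thesis using le b_gt1 by simp
  qed
  also have "\<dots> = real (card T) * real L" unfolding log_b_pow by simp
  finally show ?thesis .
qed

lemma H_WW_split:
  assumes T: "T \<subseteq> {1..K}"
  shows "\<H>(WW) \<le> \<H>(WT T) + \<H>(WT ({1..K} - T))"
proof -
  have "\<H>(WW) \<le> \<H>(\<lambda>\<omega>. (WT T \<omega>, WT ({1..K} - T) \<omega>))"
    by (rule H_mono[OF simple_function_Pair[OF sfWT[OF T] sfWT], where f="\<lambda>(a,c). restrict (\<lambda>i. if i \<in> T then a i else c i) {1..K}"])
       (auto simp: tup_def restrict_def fun_eq_iff)
  also have "\<dots> \<le> \<H>(WT T) + \<H>(WT ({1..K} - T))"
    by (rule subadd[OF sfWT[OF T] sfWT]) auto
  finally show ?thesis .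
qed

lemma H_WT:
  assumes T: "T \<subseteq> {1..K}"
  shows "\<H>(WT T) = real (card T) * real L"
proof -
  have c: "card ({1..K} - T) = K - card T"
    using T by (simp add: card_Diff_subset finite_subset)
  have cT: "card T \<le> K" using T card_mono[of "{1..K}" T] by simp
  have "\<H>(WT ({1..K} - T)) \<le> real (card ({1..K} - T)) * real L" by (rule H_WT_le) auto
  then have "\<H>(WT ({1..K} - T)) \<le> (real K - real (card T)) * real L" using c cT by (simp add: of_nat_diff)
  moreover have "real K * real L \<le> \<H>(WT T) + \<H>(WT ({1..K} - T))" using H_WW_split[OF T] H_WW by simp
  ultimately have "real (card T) * real L \<le> \<H>(WT T)" by (simp add: algebra_simps)
  with H_WT_le[OF T] show ?thesis by simp
qed

end


context information_space begin

lemma det_tup: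
  assumes fin: "finite I" and sf: "\<And>i. i \<in> I \<Longrightarrow> simple_function M (X i)"
    and C: "simple_function M C" and d: "\<And>i. i \<in> I \<Longrightarrow> det (X i) C"
  shows "det (tup I X) C"
  using fin sf d
proof (induction I rule: finite_induct)
  case empty
  show ?case
    by (rule det_fdep[where f="\<lambda>_. (\<lambda>_. undefined)"]) (use C in \<open>auto simp: tup_def\<close>)
next
  case (insert i I)
  have sI: "simple_function M (tup I X)" by (rule sf_tup) (use insert in auto)
  have sI': "simple_function M (tup (insert i I) X)" by (rule sf_tup) (use insert in auto)
  have si: "simple_function M (X i)" using insert by auto
  have d1: "det (tup I X) C" using insert by auto
  have d2: "det (\<lambda>\<omega>. (X i \<omega>, tup I X \<omega>)) C"
    by (rule det_pair[OF si sI C]) (use insert d1 in auto)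
  have d3: "det (tup (insert i I) X) (\<lambda>\<omega>. (X i \<omega>, tup I X \<omega>))"
    by (rule det_fdep[where f="\<lambda>(a,t). t(i := a)"]) (use si sI sI' in \<open>auto simp: tup_def restrict_def fun_eq_iff\<close>)
  show ?case by (rule det_trans[OF sI' _ C d3 d2]) (use si sI in auto)
qed

lemma det_const: "simple_function M C \<Longrightarrow> det (\<lambda>_. c) C"
  by (rule det_fdep[where f="\<lambda>_. c"]) auto

lemma cond_subadd_tup:
  assumes fin: "finite I" and sf: "\<And>i. i \<in> I \<Longrightarrow> simple_function M (X i)"
    and C: "simple_function M C"
  shows "\<H>(\<lambda>\<omega>. (tup I X \<omega>, C \<omega>)) - \<H>(C) \<le> (\<Sum>i\<in>I. \<H>(\<lambda>\<omega>. (X i \<omega>, C \<omega>)) - \<H>(C))"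
  using fin sf
proof (induction I rule: finite_induct)
  case empty
  have "det (tup {} X) C" by (rule det_tup) (use C in auto)
  then show ?case unfolding det_def by simp
next
  case (insert i I)
  have sI: "simple_function M (tup I X)" by (rule sf_tup) (use insert in auto)
  have sI': "simple_function M (tup (insert i I) X)" by (rule sf_tup) (use insert in auto)
  have si: "simple_function M (X i)" using insert by auto
  have e: "\<H>(\<lambda>\<omega>. (tup (insert i I) X \<omega>, C \<omega>)) = \<H>(\<lambda>\<omega>. (X i \<omega>, tup I X \<omega>, C \<omega>))"
    by (rule H_eqI[where f="\<lambda>(a,t,c). (t(i := a), c)" and g="\<lambda>(t,c). (t i, restrict t I, c)"])
       (use si sI sI' C insert.hyps in \<open>auto simp: tup_def restrict_def fun_eq_iff\<close>)
  have s: "\<H>(\<lambda>\<omega>. (X i \<omega>, tup I X \<omega>, C \<omega>)) + \<H>(C) \<le> \<H>(\<lambda>\<omega>. (X i \<omega>, C \<omega>)) + \<H>(\<lambda>\<omega>. (tup I X \<omega>, C \<omega>))"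
    by (rule submod[OF si sI C])
  have ih: "\<H>(\<lambda>\<omega>. (tup I X \<omega>, C \<omega>)) - \<H>(C) \<le> (\<Sum>i\<in>I. \<H>(\<lambda>\<omega>. (X i \<omega>, C \<omega>)) - \<H>(C))"
    using insert by auto
  show ?case using e s ih insert.hyps by simp
qed

end


context scheme begin

definition D :: "nat \<Rightarrow> 'c set \<Rightarrow> nat set \<Rightarrow> real" where
  "D k S T = \<H>(\<lambda>\<omega>. (AT k S \<omega>, F \<omega>, RS \<omega>, WT T \<omega>)) - \<H>(\<lambda>\<omega>. (F \<omega>, RS \<omega>, WT T \<omega>))"

definition h :: "nat \<Rightarrow> nat \<Rightarrow> 'c set \<Rightarrow> nat set \<Rightarrow> real" where
  "h n k S T = \<H>(\<lambda>\<omega>. (A n k S \<omega>, Q n k S \<omega>, RS \<omega>, WT T \<omega>)) - \<H>(\<lambda>\<omega>. (Q n k S \<omega>, RS \<omega>, WT T \<omega>))"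

lemma G1:
  fixes S :: "'c set"
  assumes S: "card S = m"
  shows "\<H>(\<lambda>\<omega>. (WW \<omega>, F \<omega>, RS \<omega>)) = \<H>(WW) + \<H>(\<lambda>\<omega>. (F \<omega>, RS \<omega>))"
proof -
  have sX: "simple_function M (\<lambda>\<omega>. (F \<omega>, RS \<omega>, U S \<omega>))" using sfF sfRS sfU by simp
  have "\<I>(WW ; \<lambda>\<omega>. (F \<omega>, RS \<omega>, U S \<omega>)) = 0" by (rule C1[OF S])
  then have e: "\<H>(WW) + \<H>(\<lambda>\<omega>. (F \<omega>, RS \<omega>, U S \<omega>)) - \<H>(\<lambda>\<omega>. ((F \<omega>, RS \<omega>, U S \<omega>), WW \<omega>)) = 0"
    using MIe[OF sfWW sX] by simp
  have e1: "\<H>(\<lambda>\<omega>. (F \<omega>, RS \<omega>, U S \<omega>)) = \<H>(\<lambda>\<omega>. (F \<omega>, RS \<omega>))"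
    by (rule H_eqI[where f="\<lambda>(f,r). (f, r, restrict r S)" and g="\<lambda>(f,r,u). (f,r)"])
       (use sfF sfRS sfU in \<open>auto simp: RU_def\<close>)
  have e2: "\<H>(\<lambda>\<omega>. ((F \<omega>, RS \<omega>, U S \<omega>), WW \<omega>)) = \<H>(\<lambda>\<omega>. (WW \<omega>, F \<omega>, RS \<omega>))"
    by (rule H_eqI[where f="\<lambda>(w,f,r). ((f, r, restrict r S), w)" and g="\<lambda>((f,r,u),w). (w,f,r)"])
       (use sfF sfRS sfU sfWW in \<open>auto simp: RU_def\<close>)
  show ?thesis using e e1 e2 by simp
qed

lemma WT_WW: "T \<subseteq> {1..K} \<Longrightarrow> WT T \<omega> = restrict (WW \<omega>) T"
  by (auto simp: tup_def restrict_def fun_eq_iff)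

lemma W_WW: "k \<in> {1..K} \<Longrightarrow> W k \<omega> = WW \<omega> k"
  by (auto simp: tup_def)

context
  fixes k :: nat and S :: "'c set" assumes k: "k \<in> {1..K}" and S: "card S = m"
begin

lemma sfQn: "n \<in> {1..N} \<Longrightarrow> simple_function M (Q n k S)" using sfQ k S by blast
lemma sfAn: "n \<in> {1..N} \<Longrightarrow> simple_function M (A n k S)" using sfA k S by blast
lemma sfATk: "simple_function M (AT k S)" using sfAT k S by blast
lemma sfQTk: "simple_function M (QT k S)" using sfQT k S by blast
lemma sfWk: "simple_function M (W k)" using sfW k by blast

lemmas sfs = sfQn sfAn sfATk sfQTk sfWk sfF sfRS sfWW sfU sfV

lemma dQ:
  assumes n: "n \<in> {1..N}"
  shows "det (Q n k S) F"
proof -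
  have "\<H>(QT k S | F) = 0" by (rule C3[OF k S])
  then have "\<H>(\<lambda>\<omega>. (F \<omega>, QT k S \<omega>)) = \<H>(F)" using CE[OF sfQTk sfF] by simp
  then have d1: "det (QT k S) F" unfolding det_def using H_swap[OF sfQTk sfF] by simp
  have d2: "det (Q n k S) (QT k S)"
    by (rule det_fdep[where f="\<lambda>v. v n"]) (use n sfQn[OF n] sfQTk in \<open>auto simp: tup_def\<close>)
  show ?thesis by (rule det_trans[OF sfQn[OF n] sfQTk sfF d2 d1])
qed

lemma dA:
  assumes n: "n \<in> {1..N}"
  shows "det (A n k S) (\<lambda>\<omega>. (Q n k S \<omega>, WW \<omega>, RS \<omega>))"
proof -
  have sY: "simple_function M (\<lambda>\<omega>. (Q n k S \<omega>, WW \<omega>, RS \<omega>))" using sfs n by simp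
  have "\<H>(A n k S | \<lambda>\<omega>. (Q n k S \<omega>, WW \<omega>, RS \<omega>)) = 0" by (rule C4[OF k n S])
  then show ?thesis unfolding det_def using CE[OF sfAn[OF n] sY] H_swap[OF sfAn[OF n] sY] by simp
qed

lemma dW: "det (W k) (\<lambda>\<omega>. (F \<omega>, AT k S \<omega>, U S \<omega>))"
proof -
  have sY: "simple_function M (\<lambda>\<omega>. (F \<omega>, AT k S \<omega>, U S \<omega>))" using sfs by simp
  have "\<H>(W k | \<lambda>\<omega>. (F \<omega>, AT k S \<omega>, U S \<omega>)) = 0" by (rule C5[OF k S])
  then show ?thesis unfolding det_def using CE[OF sfWk sY] H_swap[OF sfWk sY] by simp
qed

lemma C7':
  "\<H>(\<lambda>\<omega>. (WT ({1..K} - {k}) \<omega>, F \<omega>, AT k S \<omega>, U S \<omega>)) = \<H>(WT ({1..K} - {k})) + \<H>(\<lambda>\<omega>. (F \<omega>, AT k S \<omega>, U S \<omega>))"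
proof -
  have sY: "simple_function M (\<lambda>\<omega>. (F \<omega>, AT k S \<omega>, U S \<omega>))" using sfs by simp
  have sB: "simple_function M (WT ({1..K} - {k}))" by (rule sfWT) auto
  have "\<I>(WT ({1..K} - {k}) ; \<lambda>\<omega>. (F \<omega>, AT k S \<omega>, U S \<omega>)) = 0" by (rule C7[OF k S])
  then show ?thesis using MIe[OF sB sY] H_swap[OF sB sY] by simp
qed

end
end


context information_space begin
lemma H_eq_det:
  assumes X: "simple_function M X" and Y: "simple_function M Y" and d: "det X Y"
    and g: "\<And>\<omega>. \<omega> \<in> space M \<Longrightarrow> Y \<omega> = g (X \<omega>)"
  shows "\<H>(X) = \<H>(Y)"
  using det_H_le[OF X Y d] H_mono[of X Y g] X g by fastforce
end

context scheme begin

context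
  fixes k :: nat and S :: "'c set" assumes k: "k \<in> {1..K}" and S: "card S = m"
begin

lemma hD:
  assumes n: "n \<in> {1..N}" and T: "T \<subseteq> {1..K}"
  shows "h n k S T \<le> D k S T"
proof -
  note [simp] = sfQn[OF k S n] sfAn[OF k S n] sfATk[OF k S] sfF sfRS sfWW sfWT[OF T]
    sfWW[simplified] sfATk[OF k S, simplified]
  let ?An = "A n k S" and ?Qn = "Q n k S" and ?WT = "WT T"
  have dQn: "det ?Qn F" by (rule dQ[OF k S n])
  have dAn: "det ?An (\<lambda>\<omega>. (?Qn \<omega>, WW \<omega>, RS \<omega>))" by (rule dA[OF k S n])
  have s1: "\<H>(\<lambda>\<omega>. (?An \<omega>, F \<omega>, RS \<omega>, ?WT \<omega>)) \<le> \<H>(\<lambda>\<omega>. (AT k S \<omega>, F \<omega>, RS \<omega>, ?WT \<omega>))"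
    by (rule H_mono[where f="\<lambda>(z,f,r,w). (z n, f, r, w)"], simp) (use n in \<open>auto simp: tup_def\<close>)
  define Y where "Y = (\<lambda>\<omega>. (?An \<omega>, ?Qn \<omega>, RS \<omega>, ?WT \<omega>))"
  have sY: "simple_function M Y" unfolding Y_def by simp
  have s2: "\<H>(\<lambda>\<omega>. (WW \<omega>, F \<omega>, Y \<omega>)) + \<H>(Y) \<le> \<H>(\<lambda>\<omega>. (WW \<omega>, Y \<omega>)) + \<H>(\<lambda>\<omega>. (F \<omega>, Y \<omega>))"
    by (rule submod[OF sfWW sfF sY])
  have dQ3: "det ?Qn (\<lambda>\<omega>. (WW \<omega>, F \<omega>, RS \<omega>))"
    by (rule det_aug[OF _ sfF _ dQn, where f="\<lambda>(w,f,r). f"]) auto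
  have dQWR: "det (\<lambda>\<omega>. (?Qn \<omega>, WW \<omega>, RS \<omega>)) (\<lambda>\<omega>. (WW \<omega>, F \<omega>, RS \<omega>))"
    by (rule det_pair[OF _ _ _ dQ3]) (auto intro!: det_fdep[where f="\<lambda>(w,f,r). (w,r)"])
  have dA3: "det ?An (\<lambda>\<omega>. (WW \<omega>, F \<omega>, RS \<omega>))" by (rule det_trans[OF _ _ _ dAn dQWR]) auto
  have dRW: "det (\<lambda>\<omega>. (RS \<omega>, ?WT \<omega>)) (\<lambda>\<omega>. (WW \<omega>, F \<omega>, RS \<omega>))"
    by (rule det_fdep[where f="\<lambda>(w,f,r). (r, restrict w T)"], simp, simp) (auto simp: WT_WW[OF T])
  have dQRW: "det (\<lambda>\<omega>. (?Qn \<omega>, RS \<omega>, ?WT \<omega>)) (\<lambda>\<omega>. (WW \<omega>, F \<omega>, RS \<omega>))"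
    by (rule det_pair[OF _ _ _ dQ3 dRW]) simp_all
  have dY3: "det Y (\<lambda>\<omega>. (WW \<omega>, F \<omega>, RS \<omega>))"
    unfolding Y_def by (rule det_pair[OF _ _ _ dA3 dQRW]) simp_all
  have s3: "\<H>(\<lambda>\<omega>. (WW \<omega>, F \<omega>, Y \<omega>)) = \<H>(\<lambda>\<omega>. (WW \<omega>, F \<omega>, RS \<omega>))"
  proof (rule H_eq_det[where g="\<lambda>(w,f,(a,q,r,wt)). (w,f,r)"])
    have d1: "det WW (\<lambda>\<omega>. (WW \<omega>, F \<omega>, RS \<omega>))"
      by (rule det_fdep[where f="\<lambda>(w,f,r). w"]) auto
    have d2: "det F (\<lambda>\<omega>. (WW \<omega>, F \<omega>, RS \<omega>))"
      by (rule det_fdep[where f="\<lambda>(w,f,r). f"]) auto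
    have d3: "det (\<lambda>\<omega>. (F \<omega>, Y \<omega>)) (\<lambda>\<omega>. (WW \<omega>, F \<omega>, RS \<omega>))"
      by (rule det_pair[OF _ _ _ d2 dY3]) (simp_all add: sY)
    show "det (\<lambda>\<omega>. (WW \<omega>, F \<omega>, Y \<omega>)) (\<lambda>\<omega>. (WW \<omega>, F \<omega>, RS \<omega>))"
      by (rule det_pair[OF _ _ _ d1 d3]) (simp_all add: sY)
  qed (auto simp: sY Y_def)
  have s4: "\<H>(\<lambda>\<omega>. (WW \<omega>, Y \<omega>)) = \<H>(\<lambda>\<omega>. (WW \<omega>, ?Qn \<omega>, RS \<omega>))"
  proof (rule H_eq_det[where g="\<lambda>(w,(a,q,r,wt)). (w,q,r)"])
    have dA': "det ?An (\<lambda>\<omega>. (WW \<omega>, ?Qn \<omega>, RS \<omega>))"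
      by (rule det_trans[OF _ _ _ dAn]) (auto intro!: det_fdep[where f="\<lambda>(w,q,r). (q,w,r)"])
    have dR: "det (\<lambda>\<omega>. (?Qn \<omega>, RS \<omega>, ?WT \<omega>)) (\<lambda>\<omega>. (WW \<omega>, ?Qn \<omega>, RS \<omega>))"
      by (rule det_fdep[where f="\<lambda>(w,q,r). (q, r, restrict w T)"], simp, simp) (auto simp: WT_WW[OF T])
    have d1: "det WW (\<lambda>\<omega>. (WW \<omega>, ?Qn \<omega>, RS \<omega>))"
      by (rule det_fdep[where f="\<lambda>(w,q,r). w"]) auto
    have d2: "det Y (\<lambda>\<omega>. (WW \<omega>, ?Qn \<omega>, RS \<omega>))"
      unfolding Y_def by (rule det_pair[OF _ _ _ dA' dR]) simp_all
    show "det (\<lambda>\<omega>. (WW \<omega>, Y \<omega>)) (\<lambda>\<omega>. (WW \<omega>, ?Qn \<omega>, RS \<omega>))"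
      by (rule det_pair[OF _ _ _ d1 d2]) (simp_all add: sY)
  qed (auto simp: sY Y_def)
  have s5: "\<H>(\<lambda>\<omega>. (F \<omega>, Y \<omega>)) = \<H>(\<lambda>\<omega>. (?An \<omega>, F \<omega>, RS \<omega>, ?WT \<omega>))"
  proof (rule H_eq_det[where g="\<lambda>(f,(a,q,r,wt)). (a,f,r,wt)"])
    have dQ': "det ?Qn (\<lambda>\<omega>. (?An \<omega>, F \<omega>, RS \<omega>, ?WT \<omega>))"
      by (rule det_aug[OF _ sfF _ dQn, where f="\<lambda>(a,f,r,w). f"]) auto
    have dR: "det (\<lambda>\<omega>. (RS \<omega>, ?WT \<omega>)) (\<lambda>\<omega>. (?An \<omega>, F \<omega>, RS \<omega>, ?WT \<omega>))"
      by (rule det_fdep[where f="\<lambda>(a,f,r,w). (r, w)"]) auto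
    have dQR: "det (\<lambda>\<omega>. (?Qn \<omega>, RS \<omega>, ?WT \<omega>)) (\<lambda>\<omega>. (?An \<omega>, F \<omega>, RS \<omega>, ?WT \<omega>))"
      by (rule det_pair[OF _ _ _ dQ' dR]) auto
    have dA'': "det ?An (\<lambda>\<omega>. (?An \<omega>, F \<omega>, RS \<omega>, ?WT \<omega>))"
      by (rule det_fdep[where f="\<lambda>(a,f,r,w). a"]) auto
    have d1: "det F (\<lambda>\<omega>. (?An \<omega>, F \<omega>, RS \<omega>, ?WT \<omega>))"
      by (rule det_fdep[where f="\<lambda>(a,f,r,w). f"]) auto
    have d2: "det Y (\<lambda>\<omega>. (?An \<omega>, F \<omega>, RS \<omega>, ?WT \<omega>))"
      unfolding Y_def by (rule det_pair[OF _ _ _ dA'' dQR]) simp_all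
    show "det (\<lambda>\<omega>. (F \<omega>, Y \<omega>)) (\<lambda>\<omega>. (?An \<omega>, F \<omega>, RS \<omega>, ?WT \<omega>))"
      by (rule det_pair[OF _ _ _ d1 d2]) (simp_all add: sY)
  qed (auto simp: sY Y_def)
  have s6: "\<H>(\<lambda>\<omega>. (WW \<omega>, F \<omega>, RS \<omega>)) = \<H>(WW) + \<H>(\<lambda>\<omega>. (F \<omega>, RS \<omega>))" by (rule G1[OF S])
  have sQR: "simple_function M (\<lambda>\<omega>. (?Qn \<omega>, RS \<omega>))" by simp
  have s7: "\<H>(\<lambda>\<omega>. (WW \<omega>, ?Qn \<omega>, RS \<omega>)) \<le> \<H>(WW) + \<H>(\<lambda>\<omega>. (?Qn \<omega>, RS \<omega>))"
    using subadd[OF sfWW sQR] by simp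
  have s8: "\<H>(\<lambda>\<omega>. (F \<omega>, ?WT \<omega>, ?Qn \<omega>, RS \<omega>)) + \<H>(\<lambda>\<omega>. (?Qn \<omega>, RS \<omega>))
      \<le> \<H>(\<lambda>\<omega>. (F \<omega>, ?Qn \<omega>, RS \<omega>)) + \<H>(\<lambda>\<omega>. (?WT \<omega>, ?Qn \<omega>, RS \<omega>))"
    using submod[OF sfF sfWT[OF T] sQR] by simp
  have s9: "\<H>(\<lambda>\<omega>. (F \<omega>, ?WT \<omega>, ?Qn \<omega>, RS \<omega>)) = \<H>(\<lambda>\<omega>. (F \<omega>, RS \<omega>, ?WT \<omega>))"
  proof (rule H_eq_det[where g="\<lambda>(f,w,q,r). (f,r,w)"])
    have dQ': "det ?Qn (\<lambda>\<omega>. (F \<omega>, RS \<omega>, ?WT \<omega>))"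
      by (rule det_aug[OF _ sfF _ dQn, where f="\<lambda>(f,r,w). f"]) auto
    show "det (\<lambda>\<omega>. (F \<omega>, ?WT \<omega>, ?Qn \<omega>, RS \<omega>)) (\<lambda>\<omega>. (F \<omega>, RS \<omega>, ?WT \<omega>))"
    proof -
      have d1: "det F (\<lambda>\<omega>. (F \<omega>, RS \<omega>, ?WT \<omega>))"
        by (rule det_fdep[where f="\<lambda>(f,r,w). f"]) auto
      have d2: "det ?WT (\<lambda>\<omega>. (F \<omega>, RS \<omega>, ?WT \<omega>))"
        by (rule det_fdep[where f="\<lambda>(f,r,w). w"]) auto
      have d3: "det RS (\<lambda>\<omega>. (F \<omega>, RS \<omega>, ?WT \<omega>))"
        by (rule det_fdep[where f="\<lambda>(f,r,w). r"]) auto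
      have d4: "det (\<lambda>\<omega>. (?Qn \<omega>, RS \<omega>)) (\<lambda>\<omega>. (F \<omega>, RS \<omega>, ?WT \<omega>))"
        by (rule det_pair[OF _ _ _ dQ' d3]) simp_all
      have d5: "det (\<lambda>\<omega>. (?WT \<omega>, ?Qn \<omega>, RS \<omega>)) (\<lambda>\<omega>. (F \<omega>, RS \<omega>, ?WT \<omega>))"
        by (rule det_pair[OF _ _ _ d2 d4]) simp_all
      show ?thesis by (rule det_pair[OF _ _ _ d1 d5]) simp_all
    qed
  qed auto
  have s10: "\<H>(\<lambda>\<omega>. (F \<omega>, ?Qn \<omega>, RS \<omega>)) = \<H>(\<lambda>\<omega>. (F \<omega>, RS \<omega>))"
  proof (rule H_eq_det[where g="\<lambda>(f,q,r). (f,r)"])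
    have dQ': "det ?Qn (\<lambda>\<omega>. (F \<omega>, RS \<omega>))"
      by (rule det_aug[OF _ sfF _ dQn, where f="\<lambda>(f,r). f"]) auto
    show "det (\<lambda>\<omega>. (F \<omega>, ?Qn \<omega>, RS \<omega>)) (\<lambda>\<omega>. (F \<omega>, RS \<omega>))"
    proof -
      have d1: "det F (\<lambda>\<omega>. (F \<omega>, RS \<omega>))"
        by (rule det_fdep[where f="\<lambda>(f,r). f"]) auto
      have d3: "det RS (\<lambda>\<omega>. (F \<omega>, RS \<omega>))"
        by (rule det_fdep[where f="\<lambda>(f,r). r"]) auto
      have d4: "det (\<lambda>\<omega>. (?Qn \<omega>, RS \<omega>)) (\<lambda>\<omega>. (F \<omega>, RS \<omega>))"
        by (rule det_pair[OF _ _ _ dQ' d3]) simp_all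
      show ?thesis by (rule det_pair[OF _ _ _ d1 d4]) simp_all
    qed
  qed auto
  have s11: "\<H>(\<lambda>\<omega>. (?WT \<omega>, ?Qn \<omega>, RS \<omega>)) = \<H>(\<lambda>\<omega>. (?Qn \<omega>, RS \<omega>, ?WT \<omega>))"
    by (rule H_eqI[where f="\<lambda>(q,r,w). (w,q,r)" and g="\<lambda>(w,q,r). (q,r,w)"]) auto
  show ?thesis unfolding h_def D_def using s1 s2 s3 s4 s5 s6 s7 s8 s9 s10 s11 unfolding Y_def by linarith
qed

end
end


context scheme begin

lemma indep_WT:
  fixes S :: "'c set"
  assumes S: "card S = m" and T: "T \<subseteq> {1..K}"
  shows "\<H>(\<lambda>\<omega>. (F \<omega>, RS \<omega>, WT T \<omega>)) = \<H>(\<lambda>\<omega>. (F \<omega>, RS \<omega>)) + \<H>(WT T)"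
proof -
  note [simp] = sfF sfRS sfWW sfWT[OF T] sfWW[simplified]
  have sFR: "simple_function M (\<lambda>\<omega>. (F \<omega>, RS \<omega>))" by simp
  have e0: "\<H>(\<lambda>\<omega>. (F \<omega>, RS \<omega>, WT T \<omega>)) = \<H>(\<lambda>\<omega>. ((F \<omega>, RS \<omega>), WT T \<omega>))"
    by (rule H_eqI[where f="\<lambda>((f,r),w). (f,r,w)" and g="\<lambda>(f,r,w). ((f,r),w)"]) auto
  have le: "\<H>(\<lambda>\<omega>. ((F \<omega>, RS \<omega>), WT T \<omega>)) \<le> \<H>(\<lambda>\<omega>. (F \<omega>, RS \<omega>)) + \<H>(WT T)"
    using subadd[OF sFR sfWT[OF T]] by simp
  have s: "\<H>(\<lambda>\<omega>. ((F \<omega>, RS \<omega>), WW \<omega>, WT T \<omega>)) + \<H>(WT T) \<le> \<H>(\<lambda>\<omega>. ((F \<omega>, RS \<omega>), WT T \<omega>)) + \<H>(\<lambda>\<omega>. (WW \<omega>, WT T \<omega>))"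
    using submod[OF sFR sfWW sfWT[OF T]] by simp
  have e1: "\<H>(\<lambda>\<omega>. ((F \<omega>, RS \<omega>), WW \<omega>, WT T \<omega>)) = \<H>(\<lambda>\<omega>. (WW \<omega>, F \<omega>, RS \<omega>))"
    by (rule H_eqI[where f="\<lambda>(w,f,r). ((f,r),w,restrict w T)" and g="\<lambda>((f,r),w,wt). (w,f,r)"], simp, simp)
       (auto simp: WT_WW[OF T])
  have e2: "\<H>(\<lambda>\<omega>. (WW \<omega>, WT T \<omega>)) = \<H>(WW)"
    by (rule H_eqI[where f="\<lambda>w. (w,restrict w T)" and g="\<lambda>(w,wt). w"], simp, simp)
       (auto simp: WT_WW[OF T])
  show ?thesis using e0 le s e1 e2 G1[OF S] by simp
qed

context
  fixes k :: nat and S :: "'c set" assumes k: "k \<in> {1..K}" and S: "card S = m"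
begin

lemma D_nonneg: "T \<subseteq> {1..K} \<Longrightarrow> 0 \<le> D k S T"
  unfolding D_def using H_pair_ge2[OF sfATk[OF k S], of "\<lambda>\<omega>. (F \<omega>, RS \<omega>, WT T \<omega>)"]
    sfF sfRS sfWT by simp

lemma Dsum:
  assumes T: "T \<subseteq> {1..K}"
  shows "D k S T \<le> (\<Sum>n\<in>{1..N}. h n k S T)"
proof -
  note [simp] = sfF sfRS sfWT[OF T]
  define C where "C = (\<lambda>\<omega>. (F \<omega>, RS \<omega>, WT T \<omega>))"
  have sC: "simple_function M C" unfolding C_def by simp
  have DC: "D k S T = \<H>(\<lambda>\<omega>. (AT k S \<omega>, C \<omega>)) - \<H>(C)" unfolding D_def C_def by simp
  have "D k S T \<le> (\<Sum>n\<in>{1..N}. \<H>(\<lambda>\<omega>. (A n k S \<omega>, C \<omega>)) - \<H>(C))"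
    unfolding DC by (rule cond_subadd_tup[OF _ _ sC]) (auto intro: sfAn[OF k S])
  also have "\<dots> \<le> (\<Sum>n\<in>{1..N}. h n k S T)"
  proof (rule sum_mono)
    fix n assume n: "n \<in> {1..N}"
    note [simp] = sfQn[OF k S n] sfAn[OF k S n]
    have dQ': "det (Q n k S) C"
      unfolding C_def by (rule det_aug[OF _ sfF _ dQ[OF k S n], where f="\<lambda>(f,r,w). f"]) auto
    have d2: "det (\<lambda>\<omega>. (RS \<omega>, WT T \<omega>)) C"
      unfolding C_def by (rule det_fdep[where f="\<lambda>(f,r,w). (r,w)"]) auto
    have d: "det (\<lambda>\<omega>. (Q n k S \<omega>, RS \<omega>, WT T \<omega>)) C"
      by (rule det_pair[OF _ _ sC dQ' d2]) auto
    show "\<H>(\<lambda>\<omega>. (A n k S \<omega>, C \<omega>)) - \<H>(C) \<le> h n k S T"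
      unfolding h_def by (rule cond_reduce[OF _ sC _ d]) auto
  qed
  finally show ?thesis .
qed

lemma Dstep:
  assumes T: "T \<subseteq> {1..K}" and kT: "k \<notin> T"
  shows "D k S T = real L + D k S (insert k T)"
proof -
  have T': "insert k T \<subseteq> {1..K}" using T k by auto
  note [simp] = sfF sfRS sfWT[OF T] sfWT[OF T'] sfATk[OF k S] sfWk[OF k S] sfU sfATk[OF k S, simplified] sfU[unfolded RU_def]
  define X1 where "X1 = (\<lambda>\<omega>. (AT k S \<omega>, F \<omega>, RS \<omega>, WT T \<omega>))"
  define X2 where "X2 = (\<lambda>\<omega>. (AT k S \<omega>, F \<omega>, RS \<omega>, WT (insert k T) \<omega>))"
  have s1: "simple_function M X1" unfolding X1_def by simp
  have s2: "simple_function M X2" unfolding X2_def by simp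
  have dW1: "det (W k) X1"
    unfolding X1_def by (rule det_aug[OF _ _ _ dW[OF k S], where f="\<lambda>(a,f,r,w). (f,a,restrict r S)"])
      (auto simp: RU_def)
  have d1: "det (\<lambda>\<omega>. (W k \<omega>, X1 \<omega>)) X1"
    by (rule det_pair[OF _ s1 s1 dW1 det_refl[OF s1]]) simp
  have d2: "det X2 (\<lambda>\<omega>. (W k \<omega>, X1 \<omega>))"
    by (rule det_fdep[where f="\<lambda>(wk,(a,f,r,wt)). (a,f,r,wt(k := wk))"], simp add: s2, simp add: s1)
       (auto simp: X1_def X2_def tup_def restrict_def fun_eq_iff)
  have d3: "det X2 X1" by (rule det_trans[OF s2 _ s1 d2 d1]) (simp add: s1)
  have e12: "\<H>(X2) = \<H>(X1)"
    by (rule H_eq_det[OF s2 s1 d3, where g="\<lambda>(a,f,r,wt). (a,f,r,restrict wt T)"])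
       (use T in \<open>auto simp: X1_def X2_def tup_def restrict_def fun_eq_iff\<close>)
  have finT: "finite T" using T finite_subset by blast
  have c: "card (insert k T) = card T + 1" using finT kT by simp
  show ?thesis
    unfolding D_def X1_def[symmetric] X2_def[symmetric]
    using e12 indep_WT[OF S T] indep_WT[OF S T'] H_WT[OF T] H_WT[OF T'] c
    by (simp add: algebra_simps)
qed

end
end


context scheme begin

lemma hlaw:
  fixes S S' :: "'c set"
  assumes n: "n \<in> {1..N}" and k: "k \<in> {1..K}" and k': "k' \<in> {1..K}" and S: "card S = m" and S': "card S' = m"
    and T: "T \<subseteq> {1..K}"
    and L: "same_law M (\<lambda>\<omega>. (Q n k S \<omega>, A n k S \<omega>, WW \<omega>, RS \<omega>)) (\<lambda>\<omega>. (Q n k' S' \<omega>, A n k' S' \<omega>, WW \<omega>, RS \<omega>))"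
  shows "h n k S T = h n k' S' T"
proof -
  note [simp] = sfQn[OF k S n] sfAn[OF k S n] sfQn[OF k' S' n] sfAn[OF k' S' n] sfRS sfWW sfWT[OF T] sfWW[simplified]
  have sX: "simple_function M (\<lambda>\<omega>. (Q n k S \<omega>, A n k S \<omega>, WW \<omega>, RS \<omega>))" by simp
  have sY: "simple_function M (\<lambda>\<omega>. (Q n k' S' \<omega>, A n k' S' \<omega>, WW \<omega>, RS \<omega>))" by simp
  let ?g1 = "\<lambda>(q,a,w,r). (a,q,r,restrict w T)" and ?g2 = "\<lambda>(q,a,w,r). (q,r,restrict w T)"
  have a1: "\<H>(\<lambda>\<omega>. (A n k S \<omega>, Q n k S \<omega>, RS \<omega>, WT T \<omega>)) = \<H>(\<lambda>\<omega>. ?g1 (Q n k S \<omega>, A n k S \<omega>, WW \<omega>, RS \<omega>))"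
    by (rule H_cong, simp) (simp add: WT_WW[OF T])
  have a2: "\<H>(\<lambda>\<omega>. (Q n k S \<omega>, RS \<omega>, WT T \<omega>)) = \<H>(\<lambda>\<omega>. ?g2 (Q n k S \<omega>, A n k S \<omega>, WW \<omega>, RS \<omega>))"
    by (rule H_cong, simp) (simp add: WT_WW[OF T])
  have b1: "\<H>(\<lambda>\<omega>. (A n k' S' \<omega>, Q n k' S' \<omega>, RS \<omega>, WT T \<omega>)) = \<H>(\<lambda>\<omega>. ?g1 (Q n k' S' \<omega>, A n k' S' \<omega>, WW \<omega>, RS \<omega>))"
    by (rule H_cong, simp) (simp add: WT_WW[OF T])
  have b2: "\<H>(\<lambda>\<omega>. (Q n k' S' \<omega>, RS \<omega>, WT T \<omega>)) = \<H>(\<lambda>\<omega>. ?g2 (Q n k' S' \<omega>, A n k' S' \<omega>, WW \<omega>, RS \<omega>))"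
    by (rule H_cong, simp) (simp add: WT_WW[OF T])
  show ?thesis unfolding h_def a1 a2 b1 b2
    using law_H[OF sX sY L, of ?g1] law_H[OF sX sY L, of ?g2] by simp
qed

context
  fixes k :: nat and S :: "'c set" assumes k: "k \<in> {1..K}" and S: "card S = m"
begin

lemma VD: "D k S {k} \<le> \<H>(V S)"
proof -
  have Tk: "{k} \<subseteq> {1..K}" using k by simp
  have Tb: "{1..K} - {k} \<subseteq> {1..K}" by auto
  note [simp] = sfF sfRS sfWT[OF Tk] sfWT[OF Tb] sfATk[OF k S] sfWk[OF k S] sfU sfV sfWW
    sfATk[OF k S, simplified] sfU[unfolded RU_def] sfV[unfolded RSminusRU_def] sfWW[simplified] sfWT[OF Tb, simplified]
  define C where "C = (\<lambda>\<omega>. (F \<omega>, RS \<omega>, WT {k} \<omega>))"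
  define C' where "C' = (\<lambda>\<omega>. (F \<omega>, U S \<omega>, W k \<omega>))"
  define Wb where "Wb = WT ({1..K} - {k})"
  have sC: "simple_function M C" unfolding C_def by simp
  have sC': "simple_function M C'" unfolding C'_def by simp
  have sWb: "simple_function M Wb" unfolding Wb_def by simp
  have DC: "D k S {k} = \<H>(\<lambda>\<omega>. (AT k S \<omega>, C \<omega>)) - \<H>(C)" unfolding D_def C_def by simp
  have dCC: "det C' C"
    unfolding C_def C'_def
    by (rule det_fdep[where f="\<lambda>(f,r,wt). (f, restrict r S, wt k)"], simp, simp) (auto simp: RU_def tup_def)
  have a: "D k S {k} \<le> \<H>(\<lambda>\<omega>. (AT k S \<omega>, C' \<omega>)) - \<H>(C')"
    unfolding DC by (rule cond_reduce[OF _ sC sC' dCC]) simp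
  define FAU where "FAU = (\<lambda>\<omega>. (F \<omega>, AT k S \<omega>, U S \<omega>))"
  have sFAU: "simple_function M FAU" unfolding FAU_def by simp
  have dWk: "det (W k) FAU" unfolding FAU_def by (rule dW[OF k S])
  have dC'1: "det C' FAU"
  proof -
    have d1: "det F FAU" unfolding FAU_def by (rule det_fdep[where f="\<lambda>(f,a,u). f"]) auto
    have d2: "det (U S) FAU" unfolding FAU_def by (rule det_fdep[where f="\<lambda>(f,a,u). u"]) auto
    have d3: "det (\<lambda>\<omega>. (U S \<omega>, W k \<omega>)) FAU" by (rule det_pair[OF _ _ sFAU d2 dWk]) auto
    show ?thesis unfolding C'_def by (rule det_pair[OF _ _ sFAU d1 d3]) auto
  qed
  have e1: "\<H>(\<lambda>\<omega>. (AT k S \<omega>, C' \<omega>)) = \<H>(FAU)"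
  proof (rule H_eq_det[OF _ sFAU, where g="\<lambda>(a,(f,u,wk)). (f,a,u)"])
    have d1: "det (AT k S) FAU" unfolding FAU_def by (rule det_fdep[where f="\<lambda>(f,a,u). a"]) auto
    show "det (\<lambda>\<omega>. (AT k S \<omega>, C' \<omega>)) FAU" by (rule det_pair[OF _ sC' sFAU d1 dC'1]) auto
  qed (auto simp: sC' C'_def FAU_def)
  define WFAU where "WFAU = (\<lambda>\<omega>. (Wb \<omega>, FAU \<omega>))"
  have sWFAU: "simple_function M WFAU" unfolding WFAU_def using sWb sFAU by simp
  have e2: "\<H>(\<lambda>\<omega>. (Wb \<omega>, AT k S \<omega>, C' \<omega>)) = \<H>(WFAU)"
  proof (rule H_eq_det[OF _ sWFAU, where g="\<lambda>(wb,a,(f,u,wk)). (wb,(f,a,u))"])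
    have d0: "det Wb WFAU" unfolding WFAU_def by (rule det_fdep[where f=fst]) (auto simp: sWb sFAU)
    have d1: "det (AT k S) WFAU" unfolding WFAU_def FAU_def by (rule det_fdep[where f="\<lambda>(wb,f,a,u). a"]) (auto simp: sWb)
    have d2: "det C' WFAU" unfolding WFAU_def by (rule det_aug[OF sC' sFAU _ dC'1, where f=snd]) (auto simp: sWb sFAU)
    have d3: "det (\<lambda>\<omega>. (AT k S \<omega>, C' \<omega>)) WFAU" by (rule det_pair[OF _ sC' sWFAU d1 d2]) simp
    show "det (\<lambda>\<omega>. (Wb \<omega>, AT k S \<omega>, C' \<omega>)) WFAU" by (rule det_pair[OF sWb _ sWFAU d0 d3]) (simp add: sC')
  qed (auto simp: sWb sC' C'_def WFAU_def FAU_def)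
  have e3: "\<H>(WFAU) = \<H>(Wb) + \<H>(FAU)"
    unfolding WFAU_def FAU_def Wb_def using C7'[OF k S] by simp
  define Z where "Z = (\<lambda>\<omega>. (Wb \<omega>, V S \<omega>, C' \<omega>))"
  have sZ: "simple_function M Z" unfolding Z_def using sWb sC' by simp
  have dAZ: "det (AT k S) Z"
  proof (rule det_tup[OF _ _ sZ])
    fix n assume n: "n \<in> {1..N}"
    note [simp] = sfQn[OF k S n] sfAn[OF k S n]
    have dq: "det (Q n k S) Z"
      unfolding Z_def C'_def by (rule det_aug[OF _ sfF _ dQ[OF k S n], where f="\<lambda>(wb,v,f,u,wk). f"]) (auto simp: sWb)
    have dwr: "det (\<lambda>\<omega>. (WW \<omega>, RS \<omega>)) Z"
      unfolding Z_def C'_def Wb_def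
      by (rule det_fdep[where f="\<lambda>(wb,v,f,u,wk). (restrict (\<lambda>i. if i = k then wk else wb i) {1..K}, (\<lambda>c. if c \<in> S then u c else v c))"], simp, simp)
         (auto simp: tup_def RU_def RSminusRU_def restrict_def fun_eq_iff)
    have dqwr: "det (\<lambda>\<omega>. (Q n k S \<omega>, WW \<omega>, RS \<omega>)) Z" by (rule det_pair[OF _ _ sZ dq dwr]) auto
    show "det (A n k S) Z" by (rule det_trans[OF _ _ sZ dA[OF k S n] dqwr]) auto
  qed (auto intro: sfAn[OF k S])
  have e4: "\<H>(\<lambda>\<omega>. (Wb \<omega>, AT k S \<omega>, C' \<omega>)) \<le> \<H>(Z)"
  proof (rule det_H_le[OF _ sZ])
    have d0: "det Wb Z" unfolding Z_def by (rule det_fdep[where f=fst]) (auto simp: sWb sC')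
    have d2: "det C' Z" unfolding Z_def by (rule det_fdep[where f="\<lambda>(wb,v,c). c"]) (auto simp: sWb sC')
    have d3: "det (\<lambda>\<omega>. (AT k S \<omega>, C' \<omega>)) Z" by (rule det_pair[OF _ sC' sZ dAZ d2]) simp
    show "det (\<lambda>\<omega>. (Wb \<omega>, AT k S \<omega>, C' \<omega>)) Z" by (rule det_pair[OF sWb _ sZ d0 d3]) (simp add: sC')
  qed (simp add: sWb sC')
  have e5: "\<H>(Z) \<le> \<H>(\<lambda>\<omega>. (Wb \<omega>, C' \<omega>)) + \<H>(V S)"
  proof -
    have sWC: "simple_function M (\<lambda>\<omega>. (Wb \<omega>, C' \<omega>))" using sWb sC' by simp
    have "\<H>(Z) = \<H>(\<lambda>\<omega>. ((Wb \<omega>, C' \<omega>), V S \<omega>))"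
      unfolding Z_def by (rule H_eqI[where f="\<lambda>((wb,c),v). (wb,v,c)" and g="\<lambda>(wb,v,c). ((wb,c),v)"]) (auto simp: sWb sC')
    also have "\<dots> \<le> \<H>(\<lambda>\<omega>. (Wb \<omega>, C' \<omega>)) + \<H>(V S)" by (rule subadd[OF sWC sfV])
    finally show ?thesis .
  qed
  have e6: "\<H>(\<lambda>\<omega>. (Wb \<omega>, C' \<omega>)) \<le> \<H>(Wb) + \<H>(C')" by (rule subadd[OF sWb sC'])
  show ?thesis using a e1 e2 e3 e4 e5 e6 by linarith
qed

end
end


context scheme begin

definition cc :: "nat \<Rightarrow> real" where "cc j = (\<Sum>i=1..j. 1 / real N ^ i)"

lemma cc_0: "cc 0 = 0" by (simp add: cc_def)

lemma cc_Suc: "cc (Suc j) = (1 + cc j) / real N"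
proof (induction j)
  case 0 then show ?case by (simp add: cc_def)
next
  case (Suc j)
  have N0: "real N \<noteq> 0" using N1 by simp
  have "cc (Suc (Suc j)) = cc (Suc j) + 1 / real N ^ Suc (Suc j)" by (simp add: cc_def)
  also have "\<dots> = (1 + cc j) / real N + 1 / real N ^ Suc (Suc j)" using Suc by simp
  also have "\<dots> = (1 + (cc j + 1 / real N ^ Suc j)) / real N" using N0 by (simp add: field_simps)
  also have "cc j + 1 / real N ^ Suc j = cc (Suc j)" by (simp add: cc_def)
  finally show ?case .
qed

lemma ind:
  fixes S0 :: "'c set"
  assumes S0: "card S0 = m"
  shows "\<forall>T k. T \<subseteq> {1..K} \<and> card T + j = K \<and> k \<in> T \<longrightarrow>
           (\<exists>S. card S = m \<and> \<H>(U S) = \<H>(U S0) \<and> real L * cc j \<le> D k S T)"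
proof (induction j)
  case 0
  show ?case
  proof (intro allI impI)
    fix T k assume a: "T \<subseteq> {1..K} \<and> card T + 0 = K \<and> k \<in> T"
    then have kK: "k \<in> {1..K}" by auto
    have "0 \<le> D k S0 T" using D_nonneg[OF kK S0] a by simp
    then show "\<exists>S. card S = m \<and> \<H>(U S) = \<H>(U S0) \<and> real L * cc 0 \<le> D k S T"
      using S0 by (auto simp: cc_0)
  qed
next
  case (Suc j)
  show ?case
  proof (intro allI impI)
    fix T k assume a: "T \<subseteq> {1..K} \<and> card T + Suc j = K \<and> k \<in> T"
    then have T: "T \<subseteq> {1..K}" and cT: "card T + Suc j = K" and kT: "k \<in> T" by auto
    have kK: "k \<in> {1..K}" using T kT by auto
    have "\<exists>k'\<in>{1..K}. k' \<notin> T"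
    proof (rule ccontr)
      assume "\<not> ?thesis"
      then have "{1..K} \<subseteq> T" by auto
      then have "card {1..K} \<le> card T" using T by (intro card_mono) (auto intro: finite_subset)
      then show False using cT by simp
    qed
    then obtain k' where k': "k' \<in> {1..K}" and k'T: "k' \<notin> T" by blast
    have finT: "finite T" using T finite_subset by blast
    have T': "insert k' T \<subseteq> {1..K}" using T k' by auto
    have cT': "card (insert k' T) + j = K" using cT finT k'T by simp
    from Suc.IH[rule_format, of "insert k' T" k'] T' cT'
    obtain S' where S': "card S' = m" and US': "\<H>(U S') = \<H>(U S0)"
      and DS': "real L * cc j \<le> D k' S' (insert k' T)" by auto
    have step: "D k' S' T = real L + D k' S' (insert k' T)" by (rule Dstep[OF k' S' T k'T])
    have sum: "D k' S' T \<le> (\<Sum>n\<in>{1..N}. h n k' S' T)" by (rule Dsum[OF k' S' T])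
    have each: "\<forall>n\<in>{1..N}. \<exists>S''. card S'' = m \<and> \<H>(U S'') = \<H>(U S0) \<and> h n k' S' T \<le> D k S'' T"
    proof
      fix n assume n: "n \<in> {1..N}"
      obtain S'' where S'': "card S'' = m" and U'': "\<H>(U S'') = \<H>(U S')"
        and law: "same_law M (\<lambda>\<omega>. (Q n k' S' \<omega>, A n k' S' \<omega>, WW \<omega>, RS \<omega>)) (\<lambda>\<omega>. (Q n k S'' \<omega>, A n k S'' \<omega>, WW \<omega>, RS \<omega>))"
        using C6[OF k' kK n S'] by blast
      have "h n k' S' T = h n k S'' T" by (rule hlaw[OF n k' kK S' S'' T law])
      also have "\<dots> \<le> D k S'' T" by (rule hD[OF kK S'' n T])
      finally show "\<exists>S''. card S'' = m \<and> \<H>(U S'') = \<H>(U S0) \<and> h n k' S' T \<le> D k S'' T"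
        using S'' U'' US' by auto
    qed
    show "\<exists>S. card S = m \<and> \<H>(U S) = \<H>(U S0) \<and> real L * cc (Suc j) \<le> D k S T"
    proof (rule ccontr)
      assume na: "\<not> ?thesis"
      have lt: "h n k' S' T < real L * cc (Suc j)" if n: "n \<in> {1..N}" for n
      proof -
        obtain S'' where "card S'' = m" "\<H>(U S'') = \<H>(U S0)" "h n k' S' T \<le> D k S'' T"
          using each n by blast
        moreover have "\<not> real L * cc (Suc j) \<le> D k S'' T"
        proof
          assume "real L * cc (Suc j) \<le> D k S'' T"
          with calculation(1,2) have "\<exists>S. card S = m \<and> \<H>(U S) = \<H>(U S0) \<and> real L * cc (Suc j) \<le> D k S T"
            by (intro exI[of _ S'']) simp
          with na show False by blast
        qed
        ultimately show ?thesis by linarith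
      qed
      have "(\<Sum>n\<in>{1..N}. h n k' S' T) < (\<Sum>n\<in>{1..N}. real L * cc (Suc j))"
        by (rule sum_strict_mono) (use lt N1 in auto)
      also have "\<dots> = real N * (real L * cc (Suc j))" by simp
      also have "\<dots> = real L * (1 + cc j)" using N1 by (simp add: cc_Suc field_simps)
      finally have "(\<Sum>n\<in>{1..N}. h n k' S' T) < real L * (1 + cc j)" .
      moreover have "real L * (1 + cc j) \<le> (\<Sum>n\<in>{1..N}. h n k' S' T)"
        using step sum DS' by (simp add: algebra_simps)
      ultimately show False by simp
    qed
  qed
qed

lemma final:
  fixes S0 :: "'c set"
  assumes S0: "card S0 = m"
  shows "real L * cc (K - 1) \<le> \<H>(RS) - \<H>(U S0)"
proof -
  have one: "1 \<in> {1..K}" using K2 by simp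
  have "card {1::nat} + (K - 1) = K" using K2 by simp
  then obtain S where S: "card S = m" and US: "\<H>(U S) = \<H>(U S0)" and D: "real L * cc (K - 1) \<le> D 1 S {1}"
    using ind[OF S0, of "K - 1", rule_format, of "{1}" 1] one by blast
  have "D 1 S {1} \<le> \<H>(V S)" by (rule VD[OF one S])
  also have "\<dots> = \<H>(RS) - \<H>(U S)" by (rule splitH[OF S])
  finally show ?thesis using D US by simp
qed

end


theorem lemma4:
  fixes M :: "'a measure" and N K L m :: nat
    and W :: "nat \<Rightarrow> 'a \<Rightarrow> (nat \<Rightarrow> 'f::{finite,field})"
    and RS :: "'a \<Rightarrow> ('c::finite \<Rightarrow> 'r)"
    and F :: "'a \<Rightarrow> 'g"
    and Q :: "nat \<Rightarrow> nat \<Rightarrow> 'c set \<Rightarrow> 'a \<Rightarrow> 'q"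
    and A :: "nat \<Rightarrow> nat \<Rightarrow> 'c set \<Rightarrow> 'a \<Rightarrow> 'ans"
    and S :: "'c set"
  assumes "N \<ge> 1" and "K \<ge> 2" and "L \<ge> 1"
    and "valid_scheme M N K L m W RS F Q A"
    and "card S = m"
  shows "Ent M (real CARD('f)) RS / real L - Ent M (real CARD('f)) (RU RS S) / real L
           \<ge> (\<Sum>i=1..K-1. 1 / real N ^ i)"
proof -
  have ps: "prob_space M" using assms(4) unfolding valid_scheme_def Let_def by blast
  have "card {0::'f, 1} \<le> CARD('f)" by (rule card_mono) auto
  then have c2: "2 \<le> CARD('f)" by simp
  then have b1: "1 < real CARD('f)" by simp
  have i: "information_space M (real CARD('f))"
    by (rule information_space.intro[OF ps]) (unfold information_space_axioms_def, rule b1)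
  have sch: "scheme M (real CARD('f)) N K L m W RS F Q A"
    by (rule scheme.intro[OF i]) (simp only: scheme_axioms_def assms(1-4) simp_thms)
  interpret scheme M "real CARD('f)" N K L m W RS F Q A by (rule sch)
  note fin = final[OF assms(5)]
  have fin': "real L * (\<Sum>i=1..K-1. 1 / real N ^ i) \<le> Ent M (real CARD('f)) RS - Ent M (real CARD('f)) (RU RS S)"
    using fin unfolding Ent_def cc_def .
  have L0: "0 < real L" using assms(3) by simp
  have "(\<Sum>i=1..K-1. 1 / real N ^ i) \<le> (Ent M (real CARD('f)) RS - Ent M (real CARD('f)) (RU RS S)) / real L"
    using fin' L0 by (simp add: pos_le_divide_eq mult.commute)
  then show ?thesis by (simp add: diff_divide_distrib)
qed


end
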